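(* Let $p\ge1$, $\phi_1,\dots,\phi_p:\mathbb Z\to\mathbb C$ and $s\in\mathbb Z$. The $p$ functions $t\mapsto\xi^{(m)}_{t,s}$ ($1\le m\le p$), defined on $\mathbb Z_{s-p+1}=\{s-p+1,s-p+2,\dots\}$, form a fundamental set of solutions of the homogeneous equation $y_t=\sum_{l=1}^p\phi_l(t)y_{t-l}$ ($t\ge s+1$): they are solutions, they are linearly independent, and every solution $y:\mathbb Z_{s-p+1}\to\mathbb C$ of this equation is a linear combination of them.
   Context: Convention: $\phi_l(t)=0$ for $l>p$. For integers $t>s$ and $1\le m\le p$, $\Phi^{(m)}_{t,s}$ is the $(t-s)\times(t-s)$ lower Hessenberg matrix whose $(i,j)$ entry is: $\phi_{m+i-1}(s+i)$ if $j=1$; $-1$ if $j=i+1$; $\phi_{i-j+1}(s+i)$ if $2\le j\le i$; $0$ if $j>i+1$. For $t\ge s-p+1$: $\xi^{(m)}_{t,s}=\det\Phi^{(m)}_{t,s}$ if $t>s$; $\xi^{(m)}_{t,s}=1$ if $t=s-m+1$; $\xi^{(m)}_{t,s}=0$ if $s-p+1\le t\le s$, $t\ne s-m+1$. *)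

theory Defs
  imports Complex_Main "Jordan_Normal_Form.Determinant"
begin

definition phi_ext :: "nat \<Rightarrow> (nat \<Rightarrow> int \<Rightarrow> complex) \<Rightarrow> nat \<Rightarrow> int \<Rightarrow> complex" where
  "phi_ext p \<phi> l t = (if 1 \<le> l \<and> l \<le> p then \<phi> l t else 0)"

text \<open>The (t-s)x(t-s) lower Hessenberg matrix Phi^(m)_{t,s}; Jordan_Normal_Form matrices
  are 0-indexed, so entry (i,j) here is entry (i+1,j+1) of the paper.\<close>
definition Phi_mat :: "nat \<Rightarrow> (nat \<Rightarrow> int \<Rightarrow> complex) \<Rightarrow> nat \<Rightarrow> int \<Rightarrow> int \<Rightarrow> complex mat" where
  "Phi_mat p \<phi> m t s = mat (nat (t - s)) (nat (t - s)) (\<lambda>(i, j).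
     (let i1 = i + 1; j1 = j + 1 in
      if j1 = 1 then phi_ext p \<phi> (m + i1 - 1) (s + int i1)
      else if j1 = i1 + 1 then -1
      else if 2 \<le> j1 \<and> j1 \<le> i1 then phi_ext p \<phi> (i1 - j1 + 1) (s + int i1)
      else 0))"

text \<open>xi^(m)_{t,s}; meaningful for t >= s-p+1 (value 0 below that, irrelevant).\<close>
definition xi :: "nat \<Rightarrow> (nat \<Rightarrow> int \<Rightarrow> complex) \<Rightarrow> nat \<Rightarrow> int \<Rightarrow> int \<Rightarrow> complex" where
  "xi p \<phi> m t s = (if t > s then det (Phi_mat p \<phi> m t s)
                    else if t = s - int m + 1 then 1 else 0)"

end

theory Submission imports Defs begin

definition lead :: "'a mat \<Rightarrow> nat \<Rightarrow> 'a mat" where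
  "lead A j = mat j j (\<lambda>(a,b). A $$ (a,b))"

lemma det0: "det (A :: 'a::comm_ring_1 mat) = 1" if "A \<in> carrier_mat 0 0"
  using that by (simp add: det_def')

lemma hess:
  fixes A :: "'a::comm_ring_1 mat"
  assumes "A \<in> carrier_mat n n" "n \<ge> 1"
    "\<forall>i. i+1 < n \<longrightarrow> A$$(i,i+1) = -1"
    "\<forall>i j. i < n \<longrightarrow> j < n \<longrightarrow> j > i+1 \<longrightarrow> A$$(i,j) = 0"
  shows "det A = (\<Sum>j<n. A$$(n-1,j) * det (lead A j))"
  using assms
proof (induction n arbitrary: A)
  case 0 then show ?case by simp
next
  case (Suc n)
  show ?case
  proof (cases n)
    case 0
    have "det A = A $$ (0,0) * cofactor A 0 0"
      using laplace_expansion_row[OF Suc.prems(1), of 0] 0 by simp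
    moreover have "det (mat_delete A 0 0) = 1"
      by (rule det0) (use Suc.prems(1) 0 in \<open>auto simp: mat_delete_def\<close>)
    moreover have "det (lead A 0) = (1::'a)"
      by (rule det0) (auto simp: lead_def)
    ultimately show ?thesis using 0 by (simp add: cofactor_def)
  next
    case (Suc k)
    note n = this
    have A: "A \<in> carrier_mat (Suc (Suc k)) (Suc (Suc k))" using Suc.prems(1) n by simp
    define B where "B = mat_delete A k (Suc k)"
    have B: "B \<in> carrier_mat (Suc k) (Suc k)" using A by (simp add: B_def mat_delete_def)
    have Bidx: "B $$ (i,j) = A $$ (if i < k then i else Suc i, j)" if "i < Suc k" "j < Suc k" for i j
      using that A by (simp add: B_def mat_delete_def)
    have IH0: "det B = (\<Sum>j<n. B$$(n-1,j) * det (lead B j))"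
    proof (rule Suc.IH)
      show "B \<in> carrier_mat n n" using B n by simp
      show "1 \<le> n" using n by simp
      show "\<forall>i. i+1 < n \<longrightarrow> B$$(i,i+1) = -1" using Suc.prems(3) n by (auto simp: Bidx)
      show "\<forall>i j. i < n \<longrightarrow> j < n \<longrightarrow> j > i+1 \<longrightarrow> B$$(i,j) = 0" using Suc.prems(4) n by (auto simp: Bidx)
    qed
    have IH: "det B = (\<Sum>j<Suc k. B$$(k,j) * det (lead B j))" using IH0 n by simp
    have leadB: "lead B j = lead A j" if "j \<le> k" for j
      using that by (intro eq_matI) (auto simp: lead_def Bidx)
    have del: "mat_delete A (Suc k) (Suc k) = lead A (Suc k)"
      using A by (intro eq_matI) (auto simp: lead_def mat_delete_def)
    have "det A = (\<Sum>i<Suc (Suc k). A $$ (i, Suc k) * cofactor A i (Suc k))"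
      using laplace_expansion_column[OF A, of "Suc k"] by simp
    also have "\<dots> = (\<Sum>i<k. A $$ (i, Suc k) * cofactor A i (Suc k)) + A $$ (k, Suc k) * cofactor A k (Suc k)
         + A $$ (Suc k, Suc k) * cofactor A (Suc k) (Suc k)" by simp
    also have "(\<Sum>i<k. A $$ (i, Suc k) * cofactor A i (Suc k)) = 0"
      using Suc.prems(4) n by (intro sum.neutral) auto
    also have "A $$ (k, Suc k) * cofactor A k (Suc k) = det B"
      using Suc.prems(3) n by (simp add: cofactor_def B_def)
    also have "A $$ (Suc k, Suc k) * cofactor A (Suc k) (Suc k) = A $$ (Suc k, Suc k) * det (lead A (Suc k))"
      by (simp add: cofactor_def del)
    also have "det B = (\<Sum>j<Suc k. A$$(Suc k,j) * det (lead A j))"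
      unfolding IH by (intro sum.cong) (auto simp: Bidx leadB)
    finally show ?thesis using n by simp
  qed
qed

lemma Phi_carrier: "Phi_mat p \<phi> m (s + int n) s \<in> carrier_mat n n"
  by (simp add: Phi_mat_def)

lemma Phi_idx: "i < n \<Longrightarrow> j < n \<Longrightarrow> Phi_mat p \<phi> m (s + int n) s $$ (i,j) =
   (if j = 0 then phi_ext p \<phi> (m + i) (s + int (Suc i))
    else if j = i + 1 then -1
    else if j \<le> i then phi_ext p \<phi> (i - j + 1) (s + int (Suc i))
    else 0)"
  by (simp add: Phi_mat_def Let_def)

lemma lead_Phi: "j \<le> n \<Longrightarrow> lead (Phi_mat p \<phi> m (s + int n) s) j = Phi_mat p \<phi> m (s + int j) s"
  by (intro eq_matI) (auto simp: lead_def Phi_mat_def Let_def)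

lemma xi_rec:
  assumes m: "1 \<le> m" "m \<le> p" and n: "n \<ge> 1"
  shows "xi p \<phi> m (s + int n) s = (\<Sum>l = 1..p. \<phi> l (s + int n) * xi p \<phi> m (s + int n - int l) s)"
proof -
  obtain k where k: "n = Suc k" using n by (cases n) auto
  define A where "A = Phi_mat p \<phi> m (s + int n) s"
  define t where "t = s + int n"
  have A: "A \<in> carrier_mat n n" by (simp add: A_def Phi_carrier)
  have dl: "det (lead A j) = (if j = 0 then 1 else xi p \<phi> m (s + int j) s)" if "j \<le> n" for j
  proof (cases "j = 0")
    case True then show ?thesis by (simp add: lead_def det0)
  next
    case False then show ?thesis using that by (simp add: A_def lead_Phi xi_def)
  qed
  have "xi p \<phi> m t s = det A" using n by (simp add: xi_def A_def t_def)
  also have "\<dots> = (\<Sum>j<n. A$$(n-1,j) * det (lead A j))"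
    by (rule hess[OF A n]) (auto simp: A_def Phi_idx)
  also have "\<dots> = phi_ext p \<phi> (m+k) t + (\<Sum>j<k. phi_ext p \<phi> (k - j) t * xi p \<phi> m (s + int (Suc j)) s)"
  proof -
    have Aidx: "A $$ (i,j) = (if j = 0 then phi_ext p \<phi> (m + i) (s + int (Suc i))
      else if j = i + 1 then -1
      else if j \<le> i then phi_ext p \<phi> (i - j + 1) (s + int (Suc i)) else 0)" if "i < n" "j < n" for i j
      using that unfolding A_def by (rule Phi_idx)
    have "(\<Sum>j<n. A$$(n-1,j) * det (lead A j)) = A$$(k,0) * det (lead A 0) + (\<Sum>j<k. A$$(k,Suc j) * det (lead A (Suc j)))"
      unfolding k sum.lessThan_Suc_shift by simp
    also have "A$$(k,0) * det (lead A 0) = phi_ext p \<phi> (m+k) t"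
      using k by (simp add: dl Aidx t_def)
    also have "(\<Sum>j<k. A$$(k,Suc j) * det (lead A (Suc j))) = (\<Sum>j<k. phi_ext p \<phi> (k - j) t * xi p \<phi> m (s + int (Suc j)) s)"
      using k by (intro sum.cong) (auto simp: dl Aidx t_def Suc_diff_Suc)
    finally show ?thesis .
  qed
  also have "(\<Sum>j<k. phi_ext p \<phi> (k - j) t * xi p \<phi> m (s + int (Suc j)) s)
      = (\<Sum>l=1..k. phi_ext p \<phi> l t * xi p \<phi> m (t - int l) s)"
    by (rule sum.reindex_bij_witness[where i="\<lambda>l. k - l" and j="\<lambda>j. k - j"]) (auto simp: t_def k)
  also have "phi_ext p \<phi> (m+k) t = (\<Sum>l=Suc k..p+n+m. phi_ext p \<phi> l t * xi p \<phi> m (t - int l) s)"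
  proof -
    have "(\<Sum>l=Suc k..p+n+m. phi_ext p \<phi> l t * xi p \<phi> m (t - int l) s)
       = (\<Sum>l=Suc k..p+n+m. if l = m + k then phi_ext p \<phi> l t else 0)"
      by (intro sum.cong) (auto simp: xi_def t_def k)
    also have "\<dots> = phi_ext p \<phi> (m+k) t" using m k by (simp add: sum.delta)
    finally show ?thesis by simp
  qed
  also have "(\<Sum>l=Suc k..p+n+m. phi_ext p \<phi> l t * xi p \<phi> m (t - int l) s) +
      (\<Sum>l=1..k. phi_ext p \<phi> l t * xi p \<phi> m (t - int l) s)
      = (\<Sum>l=1..p+n+m. phi_ext p \<phi> l t * xi p \<phi> m (t - int l) s)"
  proof -
    have "{1..p+n+m} = {1..k} \<union> {Suc k..p+n+m}" using k by auto
    then show ?thesis by (simp add: sum.union_disjoint ivl_disj_int add.commute)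
  qed
  also have "\<dots> = (\<Sum>l=1..p. phi_ext p \<phi> l t * xi p \<phi> m (t - int l) s)"
    by (rule sum.mono_neutral_right) (auto simp: phi_ext_def)
  also have "\<dots> = (\<Sum>l=1..p. \<phi> l t * xi p \<phi> m (t - int l) s)"
    by (intro sum.cong) (auto simp: phi_ext_def)
  finally show ?thesis by (simp add: t_def)
qed

lemma xi_low: "t \<le> s \<Longrightarrow> 1 \<le> m \<Longrightarrow> xi p \<phi> m t s = (if m = nat (s - t + 1) then 1 else 0)"
  by (auto simp: xi_def)

theorem proposition2:
  fixes p :: nat and \<phi> :: "nat \<Rightarrow> int \<Rightarrow> complex" and s :: int
  assumes "p \<ge> 1"
  shows
    "(\<forall>m \<in> {1..p}. \<forall>t \<ge> s + 1.
        xi p \<phi> m t s = (\<Sum>l = 1..p. \<phi> l t * xi p \<phi> m (t - int l) s))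
   \<and>
     (\<forall>c :: nat \<Rightarrow> complex.
        (\<forall>t \<ge> s - int p + 1. (\<Sum>m = 1..p. c m * xi p \<phi> m t s) = 0)
        \<longrightarrow> (\<forall>m \<in> {1..p}. c m = 0))
   \<and>
     (\<forall>y :: int \<Rightarrow> complex.
        (\<forall>t \<ge> s + 1. y t = (\<Sum>l = 1..p. \<phi> l t * y (t - int l)))
        \<longrightarrow> (\<exists>c :: nat \<Rightarrow> complex. \<forall>t \<ge> s - int p + 1.
               y t = (\<Sum>m = 1..p. c m * xi p \<phi> m t s)))"
proof (intro conjI allI impI ballI)
  fix m t assume m: "m \<in> {1..p}" and t: "t \<ge> s + 1"
  define n where "n = nat (t - s)"
  have tn: "t = s + int n" "n \<ge> 1" using t by (auto simp: n_def)
  show "xi p \<phi> m t s = (\<Sum>l = 1..p. \<phi> l t * xi p \<phi> m (t - int l) s)"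
    unfolding tn(1) using m tn(2) by (intro xi_rec) auto
next
  have lowsum: "(\<Sum>m' = 1..p. c m' * xi p \<phi> m' (s - int m + 1) s) = c m" if "m \<in> {1..p}" for c :: "nat \<Rightarrow> complex" and m
  proof -
    have "(\<Sum>m' = 1..p. c m' * xi p \<phi> m' (s - int m + 1) s) = (\<Sum>m' = 1..p. if m' = m then c m' else 0)"
      using that by (intro sum.cong) (auto simp: xi_def)
    also have "\<dots> = c m" using that by (simp add: sum.delta)
    finally show ?thesis .
  qed
  {
    fix c :: "nat \<Rightarrow> complex" and m
    assume h: "\<forall>t \<ge> s - int p + 1. (\<Sum>m = 1..p. c m * xi p \<phi> m t s) = 0" and m: "m \<in> {1..p}"
    have "(\<Sum>m' = 1..p. c m' * xi p \<phi> m' (s - int m + 1) s) = 0" using h m by auto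
    then show "c m = 0" using lowsum[OF m] by simp
  }
  fix y :: "int \<Rightarrow> complex"
  assume rec: "\<forall>t \<ge> s + 1. y t = (\<Sum>l = 1..p. \<phi> l t * y (t - int l))"
  define c where "c m = y (s - int m + 1)" for m
  define z where "z t = y t - (\<Sum>m = 1..p. c m * xi p \<phi> m t s)" for t
  have zlow: "z t = 0" if "s - int p + 1 \<le> t" "t \<le> s" for t
  proof -
    define m where "m = nat (s - t + 1)"
    have m: "m \<in> {1..p}" "t = s - int m + 1" using that by (auto simp: m_def)
    show ?thesis unfolding z_def m(2) lowsum[OF m(1)] by (simp add: c_def)
  qed
  have zrec: "z t = (\<Sum>l = 1..p. \<phi> l t * z (t - int l))" if "t \<ge> s + 1" for t
  proof -
    have xr: "xi p \<phi> m t s = (\<Sum>l = 1..p. \<phi> l t * xi p \<phi> m (t - int l) s)" if "m \<in> {1..p}" for m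
    proof -
      define n where "n = nat (t - s)"
      have tn: "t = s + int n" "n \<ge> 1" using \<open>t \<ge> s + 1\<close> by (auto simp: n_def)
      show ?thesis unfolding tn(1) using that tn(2) by (intro xi_rec) auto
    qed
    have "(\<Sum>m = 1..p. c m * xi p \<phi> m t s) = (\<Sum>m = 1..p. \<Sum>l = 1..p. c m * (\<phi> l t * xi p \<phi> m (t - int l) s))"
      by (intro sum.cong) (auto simp: xr sum_distrib_left)
    also have "\<dots> = (\<Sum>l = 1..p. \<phi> l t * (\<Sum>m = 1..p. c m * xi p \<phi> m (t - int l) s))"
      by (subst sum.swap) (simp add: sum_distrib_left mult.left_commute)
    finally show ?thesis unfolding z_def using rec that
      by (simp add: right_diff_distrib sum_subtractf)
  qed
  have zall: "\<forall>t. s - int p + 1 \<le> t \<and> t \<le> s + int n \<longrightarrow> z t = 0" for n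
  proof (induction n)
    case 0 then show ?case using zlow by auto
  next
    case (Suc n)
    show ?case
    proof (intro allI impI)
      fix t assume t: "s - int p + 1 \<le> t \<and> t \<le> s + int (Suc n)"
      show "z t = 0"
      proof (cases "t \<le> s + int n")
        case True then show ?thesis using Suc.IH t by auto
      next
        case False
        then have ts: "t \<ge> s + 1" by simp
        have "z t = (\<Sum>l = 1..p. \<phi> l t * z (t - int l))" by (rule zrec[OF ts])
        also have "\<dots> = 0" using Suc.IH t False by (intro sum.neutral) auto
        finally show ?thesis .
      qed
    qed
  qed
  show "\<exists>c :: nat \<Rightarrow> complex. \<forall>t \<ge> s - int p + 1. y t = (\<Sum>m = 1..p. c m * xi p \<phi> m t s)"
  proof (intro exI allI impI)
    fix t assume t: "t \<ge> s - int p + 1"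
    have "z t = 0" using zall[of "nat (t - s)"] t by auto
    then show "y t = (\<Sum>m = 1..p. c m * xi p \<phi> m t s)" by (simp add: z_def)
  qed
qed

end
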